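(* Let $M$ be a compact metric space and $f:M\to M$ a homeomorphism. Then: (1) for every finite open covering $\mathcal{U}$ of $M$, $[a_{f,\mathcal{U}}(n)]\in\mathbb{B}$; (2) $o(f)\in\overline{\mathbb{B}}$.
   Context: Let $\mathcal{O}$ be the set of non-decreasing sequences $a:\mathbb{N}\to[0,\infty)$, $a\approx b$ iff $c_1a(n)\le b(n)\le c_2a(n)$ for all $n$ for some constants $0<c_1\le c_2$, $\mathbb{O}=\mathcal{O}/\!\approx$ with classes $[a(n)]$, ordered by $[a(n)]\le[b(n)]$ iff $a(n)\le Cb(n)$ for all $n$ for some $C>0$; $\overline{\mathbb{O}}$ is its Dedekind–MacNeille completion. A class $[a(n)]$ has the bounded jump property (BJP) if there is $C>0$ with $a(n+1)\le Ca(n)$ for all $n$ (independent of representative); $\mathbb{B}\subset\mathbb{O}$ is the set of such classes and $\overline{\mathbb{B}}=\{\sup(\Gamma)\in\overline{\mathbb{O}}:\Gamma\subset\mathbb{B}\text{ countable}\}$. For a finite open covering $\mathcal{U}=\{U_1,\dots,U_k\}$ of $M$, let $\mathcal{U}^n=\{U_{i_0}\cap f^{-1}(U_{i_1})\cap\cdots\cap f^{-n}(U_{i_n})\neq\emptyset: i_0,\dots,i_n\in\{1,\dots,k\}\}$ and let $a_{f,\mathcal{U}}(n)$ be the minimal cardinality of a subcovering of $\mathcal{U}^n$. The generalized entropy is $o(f)=\sup\{[g_{f,\varepsilon}(n)]:\varepsilon>0\}\in\overline{\mathbb{O}}$, where $g_{f,\varepsilon}(n)$ is the minimal cardinality of a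 finite set $G$ such that $M=\bigcup_{x\in G}\{y:\max_{0\le k\le n-1}d(f^kx,f^ky)<\varepsilon\}$; equivalently $o(f)=\sup\{[a_{f,\mathcal{U}}(n)]:\mathcal{U}\text{ a finite open covering}\}$. *)

theory Defs
  imports "HOL-Analysis.Analysis"
begin

definition Oseq :: "(nat \<Rightarrow> real) \<Rightarrow> bool" where
  "Oseq a \<longleftrightarrow> mono a \<and> (\<forall>n. 0 \<le> a n)"

text \<open>The preorder inducing the order on classes: [a] <= [b] iff a(n) <= C b(n) for some C > 0.\<close>
definition dominated :: "(nat \<Rightarrow> real) \<Rightarrow> (nat \<Rightarrow> real) \<Rightarrow> bool" where
  "dominated a b \<longleftrightarrow> (\<exists>C>0. \<forall>n. a n \<le> C * b n)"

definition bjp :: "(nat \<Rightarrow> real) \<Rightarrow> bool" where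
  "bjp a \<longleftrightarrow> (\<exists>C>0. \<forall>n. a (Suc n) \<le> C * a n)"

text \<open>An element sup(S) of the Dedekind-MacNeille
  completion of the ordered set of classes is the cut determined by this set of upper bounds;
  two suprema coincide iff their sets of upper bounds coincide.\<close>
definition O_upper :: "(nat \<Rightarrow> real) set \<Rightarrow> (nat \<Rightarrow> real) set" where
  "O_upper S = {b. Oseq b \<and> (\<forall>a\<in>S. dominated a b)}"

text \<open>Membership of a Dedekind-MacNeille element (given by its upper-bound set X) in
  overline-B: it is the supremum of a countable set of BJP classes.\<close>
definition in_Bbar :: "(nat \<Rightarrow> real) set \<Rightarrow> bool" where
  "in_Bbar X \<longleftrightarrow> (\<exists>\<Gamma>. countable \<Gamma> \<and> (\<forall>a\<in>\<Gamma>. Oseq a \<and> bjp a) \<and> O_upper \<Gamma> = X)"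

definition bowen_ball :: "('a::metric_space \<Rightarrow> 'a) \<Rightarrow> 'a set \<Rightarrow> real \<Rightarrow> nat \<Rightarrow> 'a \<Rightarrow> 'a set" where
  "bowen_ball f M \<epsilon> n x = {y\<in>M. \<forall>k<n. dist ((f^^k) x) ((f^^k) y) < \<epsilon>}"

definition bowen_seq :: "('a::metric_space \<Rightarrow> 'a) \<Rightarrow> 'a set \<Rightarrow> real \<Rightarrow> nat \<Rightarrow> real" where
  "bowen_seq f M \<epsilon> n = real (LEAST k. \<exists>G. finite G \<and> G \<subseteq> M \<and> card G = k \<and>
       M = (\<Union>x\<in>G. bowen_ball f M \<epsilon> n x))"

text \<open>Generalized entropy o(f), represented by its set of upper bounds (the DM cut).\<close>
definition gen_entropy :: "('a::metric_space \<Rightarrow> 'a) \<Rightarrow> 'a set \<Rightarrow> (nat \<Rightarrow> real) set" where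
  "gen_entropy f M = O_upper {bowen_seq f M \<epsilon> | \<epsilon>. \<epsilon> > 0}"

definition iter_cover :: "('a \<Rightarrow> 'a) \<Rightarrow> 'a set \<Rightarrow> 'a set set \<Rightarrow> nat \<Rightarrow> 'a set set" where
  "iter_cover f M \<U> n = {W. W \<noteq> {} \<and> (\<exists>V. (\<forall>j\<le>n. V j \<in> \<U>) \<and>
       W = {x\<in>M. \<forall>j\<le>n. (f^^j) x \<in> V j})}"

definition cover_seq :: "('a \<Rightarrow> 'a) \<Rightarrow> 'a set \<Rightarrow> 'a set set \<Rightarrow> nat \<Rightarrow> real" where
  "cover_seq f M \<U> n = real (LEAST k. \<exists>\<V>. \<V> \<subseteq> iter_cover f M \<U> n \<and> finite \<V> \<and>
       card \<V> = k \<and> \<Union>\<V> = M)"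

end

theory Submission
  imports Defs
begin

lemma iter_M: "\<forall>x\<in>M. f x \<in> M \<Longrightarrow> x \<in> M \<Longrightarrow> (f^^j) x \<in> M"
  by (induction j) auto

lemma iter_cover_sub: "W \<in> iter_cover f M U n \<Longrightarrow> W \<subseteq> M"
  unfolding iter_cover_def by auto

lemma iter_cover_finite:
  assumes "finite U" shows "finite (iter_cover f M U n)"
proof -
  have "iter_cover f M U n \<subseteq> (\<lambda>V. {x\<in>M. \<forall>j\<le>n. (f^^j) x \<in> V j}) ` (PiE {..n} (\<lambda>_. U))"
  proof
    fix W assume "W \<in> iter_cover f M U n"
    then obtain V where V: "\<forall>j\<le>n. V j \<in> U" "W = {x\<in>M. \<forall>j\<le>n. (f^^j) x \<in> V j}"
      unfolding iter_cover_def by auto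
    have "restrict V {..n} \<in> PiE {..n} (\<lambda>_. U)" using V(1) by auto
    moreover have "W = {x\<in>M. \<forall>j\<le>n. (f^^j) x \<in> restrict V {..n} j}" using V(2) by auto
    ultimately show "W \<in> (\<lambda>V. {x\<in>M. \<forall>j\<le>n. (f^^j) x \<in> V j}) ` (PiE {..n} (\<lambda>_. U))" by blast
  qed
  moreover have "finite (PiE {..n} (\<lambda>_. U))" using assms by (simp add: finite_PiE)
  ultimately show ?thesis using finite_subset by blast
qed

lemma iter_cover_Union:
  assumes fM: "\<forall>x\<in>M. f x \<in> M" and UM: "\<Union>U = M"
  shows "\<Union>(iter_cover f M U n) = M"
proof
  show "\<Union>(iter_cover f M U n) \<subseteq> M" using iter_cover_sub by blast
  show "M \<subseteq> \<Union>(iter_cover f M U n)"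
  proof
    fix x assume x: "x \<in> M"
    define V where "V j = (SOME A. A \<in> U \<and> (f^^j) x \<in> A)" for j
    have V: "V j \<in> U \<and> (f^^j) x \<in> V j" for j
    proof -
      have "(f^^j) x \<in> \<Union>U" using iter_M[OF fM x] UM by simp
      then obtain A where "A \<in> U" "(f^^j) x \<in> A" by (rule UnionE)
      hence "\<exists>A. A \<in> U \<and> (f^^j) x \<in> A" by (intro exI conjI)
      thus ?thesis unfolding V_def by (rule someI_ex)
    qed
    define W where "W = {y\<in>M. \<forall>j\<le>n. (f^^j) y \<in> V j}"
    have "x \<in> W" using V x unfolding W_def by auto
    hence "W \<noteq> {}" by blast
    moreover have "\<forall>j\<le>n. V j \<in> U" using V by simp
    ultimately have "W \<in> iter_cover f M U n" unfolding iter_cover_def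
      by (intro CollectI conjI exI[of _ V]) (simp_all add: W_def)
    thus "x \<in> \<Union>(iter_cover f M U n)" using \<open>x \<in> W\<close> by blast
  qed
qed

lemma cover_seq_attained:
  assumes "finite U" "\<forall>x\<in>M. f x \<in> M" "\<Union>U = M"
  shows "\<exists>V. V \<subseteq> iter_cover f M U n \<and> finite V \<and> real (card V) = cover_seq f M U n \<and> \<Union>V = M"
proof -
  let ?P = "\<lambda>k. \<exists>V. V \<subseteq> iter_cover f M U n \<and> finite V \<and> card V = k \<and> \<Union>V = M"
  have "?P (card (iter_cover f M U n))"
    using iter_cover_finite[OF assms(1)] iter_cover_Union[OF assms(2,3)] by blast
  hence "?P (Least ?P)" by (rule LeastI)
  thus ?thesis unfolding cover_seq_def by auto
qed

lemma cover_seq_le: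
  assumes "V \<subseteq> iter_cover f M U n" "finite V" "\<Union>V = M"
  shows "cover_seq f M U n \<le> card V"
proof -
  let ?P = "\<lambda>k. \<exists>V. V \<subseteq> iter_cover f M U n \<and> finite V \<and> card V = k \<and> \<Union>V = M"
  have "?P (card V)" using assms by blast
  hence "Least ?P \<le> card V" by (rule Least_le)
  thus ?thesis unfolding cover_seq_def by simp
qed

lemma cover_le:
  assumes "finite S" "\<Union>S = M" "\<forall>W\<in>S. \<exists>W'\<in>iter_cover f M U n. W \<subseteq> W'"
  shows "cover_seq f M U n \<le> card S"
proof -
  obtain T where T: "\<forall>W\<in>S. T W \<in> iter_cover f M U n \<and> W \<subseteq> T W"
    using assms(3) by metis
  have "T ` S \<subseteq> iter_cover f M U n" using T by auto
  moreover have "finite (T ` S)" using assms(1) by simp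
  moreover have "\<Union>(T ` S) = M"
  proof
    show "\<Union>(T ` S) \<subseteq> M" using T iter_cover_sub by blast
    show "M \<subseteq> \<Union>(T ` S)" using T assms(2) by blast
  qed
  ultimately have "cover_seq f M U n \<le> card (T ` S)" by (rule cover_seq_le)
  also have "\<dots> \<le> card S" using card_image_le[OF assms(1)] by simp
  finally show ?thesis .
qed

lemma cover_seq_nonneg: "0 \<le> cover_seq f M U n"
  unfolding cover_seq_def by simp

lemma cover_seq_mono:
  assumes "finite U" "\<forall>x\<in>M. f x \<in> M" "\<Union>U = M"
  shows "cover_seq f M U n \<le> cover_seq f M U (Suc n)"
proof -
  obtain V where V: "V \<subseteq> iter_cover f M U (Suc n)" "finite V" "real (card V) = cover_seq f M U (Suc n)" "\<Union>V = M"
    using cover_seq_attained[OF assms, of "Suc n"] by (elim exE conjE)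
  have "\<forall>W\<in>V. \<exists>W'\<in>iter_cover f M U n. W \<subseteq> W'"
  proof
    fix W assume "W \<in> V"
    then obtain Vf where Vf: "\<forall>j\<le>Suc n. Vf j \<in> U" "W = {x\<in>M. \<forall>j\<le>Suc n. (f^^j) x \<in> Vf j}" "W \<noteq> {}"
      using V(1) unfolding iter_cover_def by blast
    let ?W' = "{x\<in>M. \<forall>j\<le>n. (f^^j) x \<in> Vf j}"
    have "W \<subseteq> ?W'" using Vf(2) by auto
    have "?W' \<noteq> {}" using Vf(3) \<open>W \<subseteq> ?W'\<close> by blast
    moreover have "\<forall>j\<le>n. Vf j \<in> U" using Vf(1) by simp
    ultimately have "?W' \<in> iter_cover f M U n" unfolding iter_cover_def by blast
    with \<open>W \<subseteq> ?W'\<close>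
    show "\<exists>W'\<in>iter_cover f M U n. W \<subseteq> W'" by blast
  qed
  from cover_le[OF V(2) V(4) this] V(3) show ?thesis by simp
qed

lemma cover_seq_jump:
  assumes "finite U" "\<forall>x\<in>M. f x \<in> M" "\<Union>U = M"
  shows "cover_seq f M U (Suc n) \<le> card U * cover_seq f M U n"
proof -
  obtain V where V: "V \<subseteq> iter_cover f M U n" "finite V" "real (card V) = cover_seq f M U n" "\<Union>V = M"
    using cover_seq_attained[OF assms, of n] by (elim exE conjE)
  define h where "h = (\<lambda>(W, A). W \<inter> {x. (f^^Suc n) x \<in> A})"
  define S where "S = h ` (V \<times> U) - {{}}"
  have fin: "finite (V \<times> U)" using V(2) assms(1) by simp
  have "finite S" unfolding S_def using fin by simp
  moreover have "\<Union>S = M"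
  proof
    show "\<Union>S \<subseteq> M" unfolding S_def h_def using V(4) by auto
    show "M \<subseteq> \<Union>S"
    proof
      fix x assume x: "x \<in> M"
      obtain W where W: "W \<in> V" "x \<in> W" using V(4) x by blast
      obtain A where A: "A \<in> U" "(f^^Suc n) x \<in> A" using iter_M[OF assms(2) x] assms(3) by blast
      have "x \<in> h (W, A)" unfolding h_def using W A by auto
      moreover have "h (W, A) \<in> S" unfolding S_def using W A \<open>x \<in> h (W, A)\<close> by auto
      ultimately show "x \<in> \<Union>S" by blast
    qed
  qed
  moreover have "\<forall>Z\<in>S. \<exists>W'\<in>iter_cover f M U (Suc n). Z \<subseteq> W'"
  proof
    fix Z assume "Z \<in> S"
    then obtain W A where WA: "W \<in> V" "A \<in> U" "Z = W \<inter> {x. (f^^Suc n) x \<in> A}" "Z \<noteq> {}"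
      unfolding S_def h_def by auto
    then obtain Vf where Vf: "\<forall>j\<le>n. Vf j \<in> U" "W = {x\<in>M. \<forall>j\<le>n. (f^^j) x \<in> Vf j}"
      using V(1) unfolding iter_cover_def by blast
    let ?Vf = "Vf(Suc n := A)"
    have eq: "Z = {x\<in>M. \<forall>j\<le>Suc n. (f^^j) x \<in> ?Vf j}"
      using WA(3) Vf(2) by (auto simp: le_Suc_eq)
    have "\<forall>j\<le>Suc n. ?Vf j \<in> U" using Vf(1) WA(2) by (auto simp: le_Suc_eq)
    hence "Z \<in> iter_cover f M U (Suc n)" unfolding iter_cover_def using eq WA(4) by blast
    thus "\<exists>W'\<in>iter_cover f M U (Suc n). Z \<subseteq> W'" by blast
  qed
  ultimately have "cover_seq f M U (Suc n) \<le> card S" by (rule cover_le)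
  also have "card S \<le> card (h ` (V \<times> U))" unfolding S_def
    using fin by (intro card_mono) auto
  also have "\<dots> \<le> card (V \<times> U)" using card_image_le[OF fin] .
  also have "\<dots> = card V * card U" by (simp add: card_cartesian_product)
  finally have "cover_seq f M U (Suc n) \<le> real (card V * card U)" by linarith
  thus ?thesis using V(3) by (simp add: mult.commute)
qed

lemma cover_seq_Oseq_bjp:
  assumes "finite U" "\<forall>x\<in>M. f x \<in> M" "\<Union>U = M"
  shows "Oseq (cover_seq f M U) \<and> bjp (cover_seq f M U)"
proof
  show "Oseq (cover_seq f M U)" unfolding Oseq_def
    using cover_seq_nonneg[of f M U] cover_seq_mono[OF assms] by (simp add: mono_iff_le_Suc)
  show "bjp (cover_seq f M U)" unfolding bjp_def
  proof (intro exI[of _ "real (card U) + 1"] conjI allI)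
    fix n
    have "cover_seq f M U (Suc n) \<le> card U * cover_seq f M U n" by (rule cover_seq_jump[OF assms])
    also have "\<dots> \<le> (real (card U) + 1) * cover_seq f M U n"
      using cover_seq_nonneg[of f M U n] by (intro mult_right_mono) auto
    finally show "cover_seq f M U (Suc n) \<le> (real (card U) + 1) * cover_seq f M U n" .
  qed simp
qed


lemma bowen_from_cover:
  assumes "V \<subseteq> iter_cover f M U n" "finite V" "\<Union>V = M"
    and small: "\<forall>A\<in>U. \<forall>y\<in>A. \<forall>z\<in>A. dist y z < \<epsilon>"
  shows "\<exists>G. finite G \<and> G \<subseteq> M \<and> card G \<le> card V \<and> M = (\<Union>x\<in>G. bowen_ball f M \<epsilon> n x)"
proof -
  have ne: "\<forall>W\<in>V. \<exists>p. p \<in> W" using assms(1) unfolding iter_cover_def by blast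
  obtain p where p: "\<forall>W\<in>V. p W \<in> W" using ne by metis
  define G where "G = p ` V"
  have "finite G" unfolding G_def using assms(2) by simp
  moreover have "G \<subseteq> M"
  proof
    fix z assume "z \<in> G"
    then obtain W where "W \<in> V" "z = p W" unfolding G_def by blast
    thus "z \<in> M" using p assms(1) iter_cover_sub[of W f M U n] by blast
  qed
  moreover have "card G \<le> card V" unfolding G_def using card_image_le[OF assms(2)] .
  moreover have cov: "M = (\<Union>x\<in>G. bowen_ball f M \<epsilon> n x)"
  proof
    show "(\<Union>x\<in>G. bowen_ball f M \<epsilon> n x) \<subseteq> M" unfolding bowen_ball_def by auto
    show "M \<subseteq> (\<Union>x\<in>G. bowen_ball f M \<epsilon> n x)"
    proof
      fix y assume y: "y \<in> M"
      have "y \<in> \<Union>V" using y assms(3) by simp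
      then obtain W where W: "W \<in> V" "y \<in> W" by (rule UnionE)
      then obtain Vf where Vf: "\<forall>j\<le>n. Vf j \<in> U" "W = {x\<in>M. \<forall>j\<le>n. (f^^j) x \<in> Vf j}"
        using assms(1) unfolding iter_cover_def by blast
      have pW: "p W \<in> W" using p W by blast
      have "y \<in> bowen_ball f M \<epsilon> n (p W)" unfolding bowen_ball_def
      proof (intro CollectI conjI allI impI)
        show "y \<in> M" by (rule y)
        fix k assume "k < n"
        hence "(f^^k) (p W) \<in> Vf k" "(f^^k) y \<in> Vf k" "Vf k \<in> U"
          using pW W(2) Vf by auto
        thus "dist ((f^^k) (p W)) ((f^^k) y) < \<epsilon>" using small by blast
      qed
      moreover have "p W \<in> G" unfolding G_def using W by blast
      ultimately show "y \<in> (\<Union>x\<in>G. bowen_ball f M \<epsilon> n x)" by blast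
    qed
  qed
  ultimately show ?thesis by (intro exI[of _ G] conjI)
qed

lemma bowen_le_cover:
  assumes "finite U" "\<forall>x\<in>M. f x \<in> M" "\<Union>U = M"
    and small: "\<forall>A\<in>U. \<forall>y\<in>A. \<forall>z\<in>A. dist y z < \<epsilon>"
  shows "(\<exists>G. finite G \<and> G \<subseteq> M \<and> M = (\<Union>x\<in>G. bowen_ball f M \<epsilon> n x))
     \<and> bowen_seq f M \<epsilon> n \<le> cover_seq f M U n"
proof -
  obtain V where V: "V \<subseteq> iter_cover f M U n" "finite V" "real (card V) = cover_seq f M U n" "\<Union>V = M"
    using cover_seq_attained[OF assms(1-3), of n] by (elim exE conjE)
  obtain G where G: "finite G" "G \<subseteq> M" "card G \<le> card V" "M = (\<Union>x\<in>G. bowen_ball f M \<epsilon> n x)"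
    using bowen_from_cover[OF V(1,2,4) small] by (elim exE conjE)
  let ?P = "\<lambda>k. \<exists>G. finite G \<and> G \<subseteq> M \<and> card G = k \<and> M = (\<Union>x\<in>G. bowen_ball f M \<epsilon> n x)"
  have "?P (card G)" by (intro exI[of _ G] conjI G(1) G(2) refl G(4))
  hence "Least ?P \<le> card G" by (rule Least_le)
  hence "bowen_seq f M \<epsilon> n \<le> card G" unfolding bowen_seq_def by simp
  also have "\<dots> \<le> card V" using G(3) by simp
  finally have "bowen_seq f M \<epsilon> n \<le> cover_seq f M U n" using V(3) by simp
  moreover have "\<exists>G. finite G \<and> G \<subseteq> M \<and> M = (\<Union>x\<in>G. bowen_ball f M \<epsilon> n x)"
    by (intro exI[of _ G] conjI G(1) G(2) G(4))
  ultimately show ?thesis by (intro conjI)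
qed

lemma small_cover:
  assumes "compact M" "\<epsilon> > 0"
  shows "\<exists>U. finite U \<and> (\<forall>A\<in>U. openin (top_of_set M) A) \<and> \<Union>U = M
     \<and> (\<forall>A\<in>U. \<forall>y\<in>A. \<forall>z\<in>A. dist y z < \<epsilon>)"
proof -
  have "seq_compact M" using assms(1) by (rule compact_imp_seq_compact)
  from seq_compact_imp_totally_bounded[OF this] assms(2)
  obtain K where K: "finite K" "K \<subseteq> M" "M \<subseteq> (\<Union>x\<in>K. ball x (\<epsilon>/2))"
    by (meson half_gt_zero)
  define U where "U = (\<lambda>c. M \<inter> ball c (\<epsilon>/2)) ` K"
  have "finite U" unfolding U_def using K(1) by simp
  moreover have "\<forall>A\<in>U. openin (top_of_set M) A" unfolding U_def by auto
  moreover have "\<Union>U = M" unfolding U_def using K(3) by auto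
  moreover have "\<forall>A\<in>U. \<forall>y\<in>A. \<forall>z\<in>A. dist y z < \<epsilon>"
  proof (intro ballI)
    fix A y z assume "A \<in> U" "y \<in> A" "z \<in> A"
    then obtain c where "dist c y < \<epsilon>/2" "dist c z < \<epsilon>/2" unfolding U_def by auto
    thus "dist y z < \<epsilon>" using dist_triangle3[of y z c] by linarith
  qed
  ultimately show ?thesis by (intro exI[of _ U] conjI)
qed

lemma lebesgue:
  assumes "compact M" "\<forall>A\<in>U. openin (top_of_set M) A" "\<Union>U = M"
  shows "\<exists>e>0. \<forall>x\<in>M. \<exists>A\<in>U. ball x e \<inter> M \<subseteq> A"
proof -
  have "\<forall>A\<in>U. \<exists>T. open T \<and> M \<inter> T = A"
  proof
    fix A assume "A \<in> U"
    hence "openin (top_of_set M) A" using assms(2) by simp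
    then obtain T where "open T" "A = M \<inter> T" unfolding openin_open by (elim exE conjE)
    thus "\<exists>T. open T \<and> M \<inter> T = A" by (intro exI[of _ T] conjI) simp_all
  qed
  then obtain T where T: "\<forall>A\<in>U. open (T A) \<and> M \<inter> T A = A" by metis
  have "M \<subseteq> \<Union>(T ` U)"
  proof
    fix x assume "x \<in> M"
    hence "x \<in> \<Union>U" using assms(3) by simp
    then obtain A where A: "A \<in> U" "x \<in> A" by (rule UnionE)
    hence "x \<in> M \<inter> T A" using T by simp
    thus "x \<in> \<Union>(T ` U)" using A(1) by auto
  qed
  moreover have "\<And>G. G \<in> T ` U \<Longrightarrow> open G" using T by auto
  ultimately obtain e where e: "0 < e" "\<And>x. x \<in> M \<Longrightarrow> \<exists>G \<in> T ` U. ball x e \<subseteq> G"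
    using Heine_Borel_lemma[OF assms(1)] by metis
  have "\<forall>x\<in>M. \<exists>A\<in>U. ball x e \<inter> M \<subseteq> A"
  proof
    fix x assume "x \<in> M"
    then obtain A where A: "A \<in> U" "ball x e \<subseteq> T A" using e(2) by blast
    have "ball x e \<inter> M \<subseteq> M \<inter> T A" using A(2) by blast
    also have "\<dots> = A" using T A(1) by simp
    finally show "\<exists>A\<in>U. ball x e \<inter> M \<subseteq> A" using A(1) by blast
  qed
  thus ?thesis using e(1) by blast
qed

lemma bowen_ball_in_cover:
  assumes leb: "\<forall>x\<in>M. \<exists>A\<in>U. ball x e \<inter> M \<subseteq> A" and fM: "\<forall>x\<in>M. f x \<in> M" and x: "x \<in> M" and epos: "e > 0"
  shows "\<exists>W\<in>iter_cover f M U m. bowen_ball f M e (Suc m) x \<subseteq> W"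
proof -
  define V where "V j = (SOME A. A \<in> U \<and> ball ((f^^j) x) e \<inter> M \<subseteq> A)" for j
  have V: "V j \<in> U \<and> ball ((f^^j) x) e \<inter> M \<subseteq> V j" for j
  proof -
    have "(f^^j) x \<in> M" by (rule iter_M[OF fM x])
    then obtain A where "A \<in> U" "ball ((f^^j) x) e \<inter> M \<subseteq> A" using leb by blast
    hence "\<exists>A. A \<in> U \<and> ball ((f^^j) x) e \<inter> M \<subseteq> A" by blast
    thus ?thesis unfolding V_def by (rule someI_ex)
  qed
  define W where "W = {y\<in>M. \<forall>j\<le>m. (f^^j) y \<in> V j}"
  have sub: "bowen_ball f M e (Suc m) x \<subseteq> W"
  proof
    fix y assume "y \<in> bowen_ball f M e (Suc m) x"
    hence y: "y \<in> M" "\<forall>k<Suc m. dist ((f^^k) x) ((f^^k) y) < e" unfolding bowen_ball_def by auto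
    have "(f^^j) y \<in> V j" if "j \<le> m" for j
    proof -
      have "(f^^j) y \<in> ball ((f^^j) x) e \<inter> M" using y that iter_M[OF fM y(1)] by auto
      thus ?thesis using V by blast
    qed
    thus "y \<in> W" unfolding W_def using y by auto
  qed
  have "(f^^j) x \<in> V j" for j
  proof -
    have "(f^^j) x \<in> ball ((f^^j) x) e \<inter> M" using iter_M[OF fM x] epos by auto
    thus ?thesis using V by blast
  qed
  hence "x \<in> W" unfolding W_def using x by auto
  hence "W \<noteq> {}" by blast
  moreover have "\<forall>j\<le>m. V j \<in> U" using V by simp
  ultimately have "W \<in> iter_cover f M U m" unfolding iter_cover_def
    by (intro CollectI conjI exI[of _ V]) (simp_all add: W_def)
  thus ?thesis using sub by blast
qed


lemma bowen_exists:
  assumes "compact M" "\<forall>x\<in>M. f x \<in> M" "\<epsilon> > 0"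
  shows "\<exists>G. finite G \<and> G \<subseteq> M \<and> M = (\<Union>x\<in>G. bowen_ball f M \<epsilon> n x)"
proof -
  obtain U where U: "finite U" "\<Union>U = M" "\<forall>A\<in>U. \<forall>y\<in>A. \<forall>z\<in>A. dist y z < \<epsilon>"
    using small_cover[OF assms(1,3)] by (elim exE conjE)
  from bowen_le_cover[OF U(1) assms(2) U(2) U(3), of n] show ?thesis by (rule conjunct1)
qed

lemma bowen_attained:
  assumes "compact M" "\<forall>x\<in>M. f x \<in> M" "\<epsilon> > 0"
  shows "\<exists>G. finite G \<and> G \<subseteq> M \<and> real (card G) = bowen_seq f M \<epsilon> n \<and> M = (\<Union>x\<in>G. bowen_ball f M \<epsilon> n x)"
proof -
  let ?P = "\<lambda>k. \<exists>G. finite G \<and> G \<subseteq> M \<and> card G = k \<and> M = (\<Union>x\<in>G. bowen_ball f M \<epsilon> n x)"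
  obtain G where G: "finite G" "G \<subseteq> M" "M = (\<Union>x\<in>G. bowen_ball f M \<epsilon> n x)"
    using bowen_exists[OF assms, of n] by (elim exE conjE)
  have "?P (card G)" by (intro exI[of _ G] conjI G(1) G(2) refl G(3))
  hence "?P (Least ?P)" by (rule LeastI)
  then obtain G' where G': "finite G'" "G' \<subseteq> M" "card G' = Least ?P" "M = (\<Union>x\<in>G'. bowen_ball f M \<epsilon> n x)"
    by (elim exE conjE)
  have "real (card G') = bowen_seq f M \<epsilon> n" unfolding bowen_seq_def using G'(3) by (rule arg_cong)
  show ?thesis by (intro exI[of _ G'] conjI G'(1) G'(2) \<open>real (card G') = bowen_seq f M \<epsilon> n\<close> G'(4))
qed

lemma lower_bound:
  assumes cM: "compact M" and fM: "\<forall>x\<in>M. f x \<in> M" and U: "finite U"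
    "\<forall>A\<in>U. openin (top_of_set M) A" "\<Union>U = M"
  shows "\<exists>\<delta>>0. \<exists>K>0. \<forall>n. cover_seq f M U n \<le> K * bowen_seq f M \<delta> n"
proof -
  obtain e where e: "e > 0" "\<forall>x\<in>M. \<exists>A\<in>U. ball x e \<inter> M \<subseteq> A"
    using lebesgue[OF cM U(2,3)] by blast
  have step: "cover_seq f M U m \<le> bowen_seq f M e (Suc m)" for m
  proof -
    obtain G where G: "finite G" "G \<subseteq> M" "real (card G) = bowen_seq f M e (Suc m)"
      "M = (\<Union>x\<in>G. bowen_ball f M e (Suc m) x)"
      using bowen_attained[OF cM fM e(1), of "Suc m"] by (elim exE conjE)
    let ?S = "bowen_ball f M e (Suc m) ` G"
    have s1: "\<forall>W\<in>?S. \<exists>W'\<in>iter_cover f M U m. W \<subseteq> W'"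
    proof
      fix W assume "W \<in> ?S"
      then obtain x where x: "x \<in> G" "W = bowen_ball f M e (Suc m) x" by blast
      have "x \<in> M" using x(1) G(2) by blast
      from bowen_ball_in_cover[OF e(2) fM this e(1), of m] x(2)
      show "\<exists>W'\<in>iter_cover f M U m. W \<subseteq> W'" by simp
    qed
    have s2: "finite ?S" using G(1) by simp
    have s3: "\<Union>?S = M" using G(4) by (rule sym)
    have "cover_seq f M U m \<le> card ?S" by (rule cover_le[OF s2 s3 s1])
    also have "\<dots> \<le> card G" using card_image_le[OF G(1)] by simp
    finally show ?thesis using G(3) by simp
  qed
  have gnn: "0 \<le> bowen_seq f M e n" for n unfolding bowen_seq_def by simp
  show ?thesis
  proof (cases "M = {}")
    case True
    have "cover_seq f M U n \<le> 0" for n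
      using cover_seq_le[of "{}" f M U n] True by simp
    have "\<forall>n. cover_seq f M U n \<le> 1 * bowen_seq f M e n"
    proof
      fix n show "cover_seq f M U n \<le> 1 * bowen_seq f M e n"
        using \<open>cover_seq f M U n \<le> 0\<close> gnn[of n] by linarith
    qed
    thus ?thesis using e(1) by (intro exI[of _ e] conjI exI[of _ 1]) auto
  next
    case False
    have g1: "1 \<le> bowen_seq f M e n" for n
    proof -
      obtain G where G: "finite G" "real (card G) = bowen_seq f M e n"
        "M = (\<Union>x\<in>G. bowen_ball f M e n x)" and "G \<subseteq> M"
        using bowen_attained[OF cM fM e(1), of n] by (elim exE conjE)
      have "G \<noteq> {}"
      proof
        assume "G = {}"
        hence "(\<Union>x\<in>G. bowen_ball f M e n x) = {}" by simp
        thus False using G(3) False by argo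
      qed
      hence "card G \<ge> 1" using G(1) by (simp add: Suc_leI card_gt_0_iff)
      thus ?thesis using G(2) by simp
    qed
    define K where "K = real (card U) + cover_seq f M U 0 + 1"
    have a0: "0 \<le> cover_seq f M U 0" by (rule cover_seq_nonneg)
    have Kpos: "K > 0" unfolding K_def using a0 by simp
    have "cover_seq f M U n \<le> K * bowen_seq f M e n" for n
    proof (cases n)
      case 0
      have "cover_seq f M U 0 \<le> K * 1" unfolding K_def by simp
      also have "\<dots> \<le> K * bowen_seq f M e 0" using g1 Kpos by (intro mult_left_mono) auto
      finally show ?thesis using 0 by simp
    next
      case (Suc m)
      have "cover_seq f M U (Suc m) \<le> card U * cover_seq f M U m"
        by (rule cover_seq_jump[OF U(1) fM U(3)])
      also have "\<dots> \<le> card U * bowen_seq f M e (Suc m)" using step by (intro mult_left_mono) auto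
      also have "\<dots> \<le> K * bowen_seq f M e (Suc m)" using gnn a0 unfolding K_def
        by (intro mult_right_mono) auto
      finally show ?thesis using Suc by simp
    qed
    thus ?thesis using e(1) Kpos by blast
  qed
qed

theorem proposition2p4:
  fixes M :: "'a::metric_space set" and f :: "'a \<Rightarrow> 'a"
  assumes "compact M"
    and "\<exists>g. homeomorphism M M f g"
  shows "(\<forall>\<U>. finite \<U> \<and> (\<forall>U\<in>\<U>. openin (top_of_set M) U) \<and> \<Union>\<U> = M
            \<longrightarrow> Oseq (cover_seq f M \<U>) \<and> bjp (cover_seq f M \<U>))
         \<and> in_Bbar (gen_entropy f M)"
proof -
  obtain g where g: "homeomorphism M M f g" using assms(2) by (elim exE)
  have fim: "f ` M = M" using g by (rule homeomorphism_image1)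
  have fM: "\<forall>x\<in>M. f x \<in> M"
  proof
    fix x assume "x \<in> M"
    hence "f x \<in> f ` M" by (rule imageI)
    thus "f x \<in> M" by (simp only: fim)
  qed
  have P1: "\<forall>\<U>. finite \<U> \<and> (\<forall>U\<in>\<U>. openin (top_of_set M) U) \<and> \<Union>\<U> = M
            \<longrightarrow> Oseq (cover_seq f M \<U>) \<and> bjp (cover_seq f M \<U>)"
  proof (intro allI impI)
    fix \<U> assume H: "finite \<U> \<and> (\<forall>U\<in>\<U>. openin (top_of_set M) U) \<and> \<Union>\<U> = M"
    have H1: "finite \<U>" using H by (elim conjE)
    have H3: "\<Union>\<U> = M" using H by (elim conjE)
    show "Oseq (cover_seq f M \<U>) \<and> bjp (cover_seq f M \<U>)" by (rule cover_seq_Oseq_bjp[OF H1 fM H3])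
  qed
  define Q where "Q m U \<longleftrightarrow> finite U \<and> (\<forall>A\<in>U. openin (top_of_set M) A) \<and> \<Union>U = M
     \<and> (\<forall>A\<in>U. \<forall>y\<in>A. \<forall>z\<in>A. dist y z < 1 / real (Suc m))" for m U
  define Um where "Um m = (SOME U. Q m U)" for m
  have Um: "Q m (Um m)" for m
  proof -
    have "\<exists>U. Q m U" unfolding Q_def by (rule small_cover[OF assms(1)]) simp
    thus ?thesis unfolding Um_def by (rule someI_ex)
  qed
  have Q1: "finite (Um m)" for m using Um[of m] unfolding Q_def by (elim conjE)
  have Q2: "\<forall>A\<in>Um m. openin (top_of_set M) A" for m using Um[of m] unfolding Q_def by (elim conjE)
  have Q3: "\<Union>(Um m) = M" for m using Um[of m] unfolding Q_def by (elim conjE)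
  have Q4: "\<forall>A\<in>Um m. \<forall>y\<in>A. \<forall>z\<in>A. dist y z < 1 / real (Suc m)" for m
    using Um[of m] unfolding Q_def by (elim conjE)
  define \<Gamma> where "\<Gamma> = range (\<lambda>m. cover_seq f M (Um m))"
  have "countable \<Gamma>" unfolding \<Gamma>_def by simp
  moreover have "\<forall>a\<in>\<Gamma>. Oseq a \<and> bjp a"
  proof
    fix a assume "a \<in> \<Gamma>"
    then obtain m where "a = cover_seq f M (Um m)" unfolding \<Gamma>_def by blast
    thus "Oseq a \<and> bjp a" using cover_seq_Oseq_bjp[OF Q1 fM Q3, of m] by simp
  qed
  moreover have "O_upper \<Gamma> = gen_entropy f M"
  proof
    show "O_upper \<Gamma> \<subseteq> gen_entropy f M"
    proof
      fix b assume b: "b \<in> O_upper \<Gamma>"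
      have "dominated (bowen_seq f M \<epsilon>) b" if epos: "\<epsilon> > 0" for \<epsilon>
      proof -
        obtain m where m: "inverse (real (Suc m)) < \<epsilon>" using reals_Archimedean[OF epos] by blast
        have small: "\<forall>A\<in>Um m. \<forall>y\<in>A. \<forall>z\<in>A. dist y z < \<epsilon>"
        proof (intro ballI)
          fix A y z assume "A \<in> Um m" "y \<in> A" "z \<in> A"
          hence "dist y z < 1 / real (Suc m)" using Q4[of m] by blast
          thus "dist y z < \<epsilon>" using m by (simp add: inverse_eq_divide)
        qed
        have le: "bowen_seq f M \<epsilon> n \<le> cover_seq f M (Um m) n" for n
          using bowen_le_cover[OF Q1 fM Q3 small, of n] by (rule conjunct2)
        have "cover_seq f M (Um m) \<in> \<Gamma>" unfolding \<Gamma>_def by simp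
        hence "dominated (cover_seq f M (Um m)) b" using b unfolding O_upper_def by blast
        then obtain C where C: "C > 0" "\<forall>n. cover_seq f M (Um m) n \<le> C * b n"
          unfolding dominated_def by blast
        have "\<forall>n. bowen_seq f M \<epsilon> n \<le> C * b n"
        proof
          fix n show "bowen_seq f M \<epsilon> n \<le> C * b n" using le[of n] C(2) by (meson order_trans)
        qed
        thus ?thesis unfolding dominated_def using C(1) by blast
      qed
      moreover have "Oseq b" using b unfolding O_upper_def by blast
      ultimately show "b \<in> gen_entropy f M" unfolding gen_entropy_def O_upper_def by blast
    qed
    show "gen_entropy f M \<subseteq> O_upper \<Gamma>"
    proof
      fix b assume b: "b \<in> gen_entropy f M"
      have "dominated a b" if aG: "a \<in> \<Gamma>" for a
      proof -
        obtain m where a: "a = cover_seq f M (Um m)" using aG unfolding \<Gamma>_def by blast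
        obtain \<delta> K where dK: "\<delta> > 0" "K > 0" "\<forall>n. cover_seq f M (Um m) n \<le> K * bowen_seq f M \<delta> n"
          using lower_bound[OF assms(1) fM Q1 Q2 Q3, of m] by (elim exE conjE)
        have "bowen_seq f M \<delta> \<in> {bowen_seq f M \<epsilon> | \<epsilon>. \<epsilon> > 0}" using dK(1) by blast
        hence "dominated (bowen_seq f M \<delta>) b" using b
          unfolding gen_entropy_def O_upper_def by blast
        then obtain C where C: "C > 0" "\<forall>n. bowen_seq f M \<delta> n \<le> C * b n"
          unfolding dominated_def by blast
        have "a n \<le> (K * C) * b n" for n
        proof -
          have "a n \<le> K * bowen_seq f M \<delta> n" using dK(3) a by simp
          also have "\<dots> \<le> K * (C * b n)" using C(2) dK(2) by (intro mult_left_mono) auto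
          finally show ?thesis by simp
        qed
        thus ?thesis unfolding dominated_def using dK(2) C(1) by (intro exI[of _ "K * C"]) simp
      qed
      moreover have "Oseq b" using b unfolding gen_entropy_def O_upper_def by blast
      ultimately show "b \<in> O_upper \<Gamma>" unfolding O_upper_def by blast
    qed
  qed
  ultimately have "in_Bbar (gen_entropy f M)" unfolding in_Bbar_def by blast
  with P1 show ?thesis by (intro conjI)
qed

end
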